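(* Let $G=(V,E)$ be a graph and $n\in\mathbb N$. Suppose that for each $i<n$ the set $A_i\subseteq V$ spans an $n$-connected subgraph of $G$, and that there are pairwise distinct points $y_{i,k}$ ($i<n$, $k<n$) and $x_k$ ($k<n$) in $V$ such that $y_{i,k}\in A_i\cap N_G(x_k)$ for all $i<n$, $k<n$. Let $X=\{x_k:k<n\}$. Then $A=\bigcup\{A_i:i<n\}\cup X$ spans an $n$-connected subgraph of $G$.
   Context: A graph is $n$-connected iff the removal of fewer than $n$ vertices leaves it connected. $N_G(v)=\{w\in V:\{v,w\}\in E\}$. *)

theory Defs
  imports Main
begin

definition graph :: "'a set \<Rightarrow> 'a set set \<Rightarrow> bool" where
  "graph V E \<longleftrightarrow> (\<forall>e\<in>E. \<exists>v w. v \<in> V \<and> w \<in> V \<and> v \<noteq> w \<and> e = {v, w})"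

definition neighbors :: "'a set \<Rightarrow> 'a set set \<Rightarrow> 'a \<Rightarrow> 'a set" where
  "neighbors V E v = {w \<in> V. {v, w} \<in> E}"

definition adj_on :: "'a set set \<Rightarrow> 'a set \<Rightarrow> ('a \<times> 'a) set" where
  "adj_on E S = {(a, b). a \<in> S \<and> b \<in> S \<and> {a, b} \<in> E}"

definition connected_on :: "'a set set \<Rightarrow> 'a set \<Rightarrow> bool" where
  "connected_on E S \<longleftrightarrow> (\<forall>u\<in>S. \<forall>v\<in>S. (u, v) \<in> (adj_on E S)\<^sup>*)"

definition n_connected_on :: "'a set set \<Rightarrow> 'a set \<Rightarrow> nat \<Rightarrow> bool" where
  "n_connected_on E S n \<longleftrightarrow>
     (\<forall>R. R \<subseteq> S \<and> finite R \<and> card R < n \<longrightarrow> connected_on E (S - R))"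

end

theory Submission
  imports Defs
begin

lemma pig:
  assumes "finite R" "card R < n" "inj_on f {..<(n::nat)}"
  shows "\<exists>k<n. f k \<notin> R"
proof (rule ccontr)
  assume "\<not> ?thesis"
  hence "f ` {..<n} \<subseteq> R" by auto
  hence "card (f ` {..<n}) \<le> card R" using assms(1) card_mono by blast
  with card_image[OF assms(3)] assms(2) show False by simp
qed

lemma pig3:
  assumes "finite R" "card R < n"
    and "\<forall>k<n. T k \<inter> R \<noteq> {}"
    and "\<forall>k<n. \<forall>k'<n. k \<noteq> k' \<longrightarrow> T k \<inter> T k' = {}"
  shows False
proof -
  define f where "f k = (SOME r. r \<in> T k \<inter> R)" for k
  have f: "f k \<in> T k \<inter> R" if "k<n" for k
    unfolding f_def using assms(3) that by (metis ex_in_conv someI_ex)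
  have "inj_on f {..<n}"
  proof (rule inj_onI)
    fix a b assume "a \<in> {..<n}" "b \<in> {..<n}" "f a = f b"
    thus "a = b" using f[of a] f[of b] assms(4) by auto
  qed
  from pig[OF assms(1,2) this] f show False by auto
qed

theorem mainTheorem4:
  fixes V :: "'a set" and E :: "'a set set" and n :: nat
    and A :: "nat \<Rightarrow> 'a set" and y :: "nat \<Rightarrow> nat \<Rightarrow> 'a" and x :: "nat \<Rightarrow> 'a"
  assumes "graph V E"
    and "\<forall>i<n. A i \<subseteq> V \<and> n_connected_on E (A i) n"
    and "\<forall>k<n. x k \<in> V"
    and "inj_on (\<lambda>p. y (fst p) (snd p)) ({..<n} \<times> {..<n})"
    and "inj_on x {..<n}"
    and "\<forall>i<n. \<forall>k<n. \<forall>j<n. y i k \<noteq> x j"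
    and "\<forall>i<n. \<forall>k<n. y i k \<in> A i \<inter> neighbors V E (x k)"
  shows "n_connected_on E ((\<Union>i<n. A i) \<union> x ` {..<n}) n"
  unfolding n_connected_on_def
proof (intro allI impI)
  fix R assume R: "R \<subseteq> (\<Union>i<n. A i) \<union> x ` {..<n} \<and> finite R \<and> card R < n"
  define S where "S = (\<Union>i<n. A i) \<union> x ` {..<n} - R"
  let ?r = "(adj_on E S)\<^sup>*"
  have n0: "0 < n" using R by simp
  have symr: "sym ?r"
    by (rule sym_rtrancl) (auto simp: sym_def adj_on_def insert_commute)
  have edge: "(x k, y i k) \<in> ?r" "(y i k, x k) \<in> ?r"
    if "i<n" "k<n" "x k \<notin> R" "y i k \<notin> R" for i k
  proof -
    have "(x k, y i k) \<in> adj_on E S"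
      using assms(7) that unfolding adj_on_def S_def neighbors_def by blast
    thus "(x k, y i k) \<in> ?r" by blast
    thus "(y i k, x k) \<in> ?r" using symr by (meson symD)
  qed
  have L1: "(u, v) \<in> ?r" if "i<n" "u \<in> A i - R" "v \<in> A i - R" for i u v
  proof -
    have "card (A i \<inter> R) \<le> card R" using R by (simp add: card_mono)
    hence "connected_on E (A i - (A i \<inter> R))" using assms(2) that(1) R
      unfolding n_connected_on_def by auto
    moreover have "A i - (A i \<inter> R) = A i - R" by blast
    ultimately have "connected_on E (A i - R)" by simp
    hence "(u,v) \<in> (adj_on E (A i - R))\<^sup>*" using that unfolding connected_on_def by blast
    moreover have "adj_on E (A i - R) \<subseteq> adj_on E S"
      unfolding adj_on_def S_def using that(1) by auto
    ultimately show ?thesis using rtrancl_mono by blast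
  qed
  have yA: "y i k \<in> A i" if "i<n" "k<n" for i k using assms(7) that by blast
  have L2: "\<exists>k<n. x k \<notin> R \<and> y i k \<notin> R \<and> y j k \<notin> R" if "i<n" "j<n" for i j
  proof (rule ccontr)
    assume "\<not> ?thesis"
    hence "\<forall>k<n. {x k, y i k, y j k} \<inter> R \<noteq> {}" by auto
    moreover have "\<forall>k<n. \<forall>k'<n. k \<noteq> k' \<longrightarrow> {x k, y i k, y j k} \<inter> {x k', y i k', y j k'} = {}"
    proof (intro allI impI)
      fix k k' assume k: "k<n" "k'<n" "k \<noteq> k'"
      have "x k \<noteq> x k'" using assms(5) k by (meson inj_on_eq_iff lessThan_iff)
      moreover have "y a k \<noteq> y b k'" if "a<n" "b<n" for a b
        using inj_onD[OF assms(4), of "(a,k)" "(b,k')"] that k by auto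
      moreover have "y a k \<noteq> x k'" "x k \<noteq> y a k'" if "a<n" for a
        using assms(6) that k by metis+
      ultimately show "{x k, y i k, y j k} \<inter> {x k', y i k', y j k'} = {}"
        using \<open>i<n\<close> \<open>j<n\<close> by auto
    qed
    ultimately show False using pig3[of R n "\<lambda>k. {x k, y i k, y j k}"] R by blast
  qed
  have L3: "(w, w') \<in> ?r" if h: "i<n" "j<n" "w \<in> A i - R" "w' \<in> A j - R" for i j w w'
  proof -
    obtain k where k: "k<n" "x k \<notin> R" "y i k \<notin> R" "y j k \<notin> R" using L2[OF h(1,2)] by blast
    have "(w, y i k) \<in> ?r" using L1[OF that(1) that(3)] yA that k by blast
    also have "(y i k, x k) \<in> ?r" using edge that k by blast
    also have "(x k, y j k) \<in> ?r" using edge that k by blast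
    also have "(y j k, w') \<in> ?r" using L1[OF that(2) _ that(4)] yA that k by blast
    finally show ?thesis .
  qed
  have L4: "\<exists>i<n. \<exists>w \<in> A i - R. (u, w) \<in> ?r" if "u \<in> S" for u
  proof -
    from that consider (a) i where "i<n" "u \<in> A i - R" | (b) k where "k<n" "u = x k" "x k \<notin> R"
      unfolding S_def by blast
    then show ?thesis
    proof cases
      case a then show ?thesis by blast
    next
      case b
      have "inj_on (\<lambda>i. y i k) {..<n}"
        using assms(4) b(1) unfolding inj_on_def by auto
      then obtain i where "i<n" "y i k \<notin> R" using pig R by blast
      then show ?thesis using edge[of i k] b yA by blast
    qed
  qed
  show "connected_on E S" unfolding connected_on_def
  proof (intro ballI)
    fix u v assume "u \<in> S" "v \<in> S"
    then obtain i w j w' where "i<n" "w \<in> A i - R" "(u,w) \<in> ?r" "j<n" "w' \<in> A j - R" "(v,w') \<in> ?r"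
      using L4 by meson
    moreover have "(w', v) \<in> ?r" using calculation symr by (meson symD)
    ultimately show "(u, v) \<in> ?r" using L3 by (meson rtrancl_trans)
  qed
qed

end
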